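(* Let $w, v \in \mathfrak{S}_n$ with $v \prec w$ in the Bruhat order, $\textsf{supp}(v) \subsetneq \textsf{supp}(w)$, and $B(w) \cong \mathbf{2} \times B(v)$, where $\mathbf{2}$ is the two-element chain, and let $i$ be the unique element of $\textsf{supp}(w) \setminus \textsf{supp}(v)$. Then $i$ is unconfined in every reduced word of $w$.
   Context: $\sigma_i$ ($1\le i\le n-1$) is the simple transposition swapping $i$ and $i+1$; products are compositions of maps. A reduced word of $w$ is a word $i_1\cdots i_\ell$ of minimal length with $w=\sigma_{i_1}\cdots\sigma_{i_\ell}$. $\textsf{supp}(w)$ is the set of letters appearing in (any) reduced word of $w$. Bruhat order: $u \preceq w$ iff some reduced word of $u$ is a subword of some reduced word of $w$; $B(w)=\{u: u\preceq w\}$. Given a reduced word $s$ in which the letter $i$ appears exactly once, $i$ is unconfined in $s$ if that occurrence is not between two occurrences of $i+1$ and not between two occurrences of $i-1$ in $s$. *)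

theory Defs
  imports "HOL-Combinatorics.Permutations" "HOL-Library.Sublist"
begin

definition sigma :: "nat \<Rightarrow> (nat \<Rightarrow> nat)" where
  "sigma i = Transposition.transpose i (Suc i)"

definition word_perm :: "nat list \<Rightarrow> (nat \<Rightarrow> nat)" where
  "word_perm s = foldr (\<lambda>i f. sigma i \<circ> f) s id"

definition is_word :: "nat \<Rightarrow> nat list \<Rightarrow> bool" where
  "is_word n s \<longleftrightarrow> set s \<subseteq> {1..<n}"

definition reduced_word :: "nat \<Rightarrow> (nat \<Rightarrow> nat) \<Rightarrow> nat list \<Rightarrow> bool" where
  "reduced_word n w s \<longleftrightarrow> is_word n s \<and> word_perm s = w \<and>
     (\<forall>t. is_word n t \<and> word_perm t = w \<longrightarrow> length s \<le> length t)"

definition supp :: "nat \<Rightarrow> (nat \<Rightarrow> nat) \<Rightarrow> nat set" where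
  "supp n w = {i. \<exists>s. reduced_word n w s \<and> i \<in> set s}"

definition bruhat_le :: "nat \<Rightarrow> (nat \<Rightarrow> nat) \<Rightarrow> (nat \<Rightarrow> nat) \<Rightarrow> bool" where
  "bruhat_le n u w \<longleftrightarrow> (\<exists>su sw. reduced_word n u su \<and> reduced_word n w sw \<and> subseq su sw)"

definition bruhat_ideal :: "nat \<Rightarrow> (nat \<Rightarrow> nat) \<Rightarrow> (nat \<Rightarrow> nat) set" where
  "bruhat_ideal n w = {u. u permutes {1..n} \<and> bruhat_le n u w}"

text \<open>B(w) is isomorphic (as a poset under Bruhat order) to the product 2 x B(v),
  where 2 = (bool, False < True) is the two-element chain and the product carries
  the componentwise order.\<close>
definition iso_two_times :: "nat \<Rightarrow> (nat \<Rightarrow> nat) \<Rightarrow> (nat \<Rightarrow> nat) \<Rightarrow> bool" where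
  "iso_two_times n w v \<longleftrightarrow>
     (\<exists>f :: (nat \<Rightarrow> nat) \<Rightarrow> bool \<times> (nat \<Rightarrow> nat).
        bij_betw f (bruhat_ideal n w) (UNIV \<times> bruhat_ideal n v) \<and>
        (\<forall>x\<in>bruhat_ideal n w. \<forall>y\<in>bruhat_ideal n w.
           bruhat_le n x y \<longleftrightarrow> (fst (f x) \<le> fst (f y) \<and> bruhat_le n (snd (f x)) (snd (f y)))))"

definition unconfined :: "nat \<Rightarrow> nat list \<Rightarrow> bool" where
  "unconfined i s \<longleftrightarrow> count_list s i = 1 \<and>
     (\<forall>p a b. p < length s \<and> s ! p = i \<and> a < p \<and> p < b \<and> b < length s \<longrightarrow>
        \<not> (s ! a = i + 1 \<and> s ! b = i + 1) \<and>
        \<not> (i \<ge> 1 \<and> s ! a = i - 1 \<and> s ! b = i - 1))"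

end

theory Submission
  imports Defs
begin


lemma word_perm_Nil[simp]: "word_perm [] = id"
  by (simp add: word_perm_def)
lemma word_perm_Cons[simp]: "word_perm (k # s) = sigma k \<circ> word_perm s"
  by (simp add: word_perm_def)
lemma word_perm_append[simp]: "word_perm (s @ t) = word_perm s \<circ> word_perm t"
  by (induction s) auto

lemma sigma_apply: "sigma k x = (if x = k then Suc k else if x = Suc k then k else x)"
  by (simp add: sigma_def Transposition.transpose_def)

lemma sigma_sigma[simp]: "sigma k \<circ> sigma k = id"
  by (rule ext) (simp add: sigma_apply)
lemma sigma_sigma_apply[simp]: "sigma k (sigma k x) = x"
  by (simp add: sigma_apply)

lemma sigma_permutes: "1 \<le> k \<Longrightarrow> k < n \<Longrightarrow> sigma k permutes {1..n}"
  unfolding sigma_def by (rule permutes_swap_id) auto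

lemma is_word_Cons[simp]: "is_word n (k # s) \<longleftrightarrow> k \<in> {1..<n} \<and> is_word n s"
  by (auto simp: is_word_def)
lemma is_word_append[simp]: "is_word n (s @ t) \<longleftrightarrow> is_word n s \<and> is_word n t"
  by (auto simp: is_word_def)
lemma is_word_Nil[simp]: "is_word n []"
  by (auto simp: is_word_def)

lemma word_perm_permutes: "is_word n s \<Longrightarrow> word_perm s permutes {1..n}"
proof (induction s)
  case Nil then show ?case by (auto simp: permutes_def)
next
  case (Cons k s)
  then have "word_perm s permutes {1..n}" "sigma k permutes {1..n}"
    using sigma_permutes[of k n] by auto
  then show ?case by (simp only: word_perm_Cons permutes_compose)
qed

lemma sigma_comm: "Suc i < m \<or> Suc m < i \<Longrightarrow> sigma i \<circ> sigma m = sigma m \<circ> sigma i"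
  by (rule ext) (auto simp: sigma_apply)

lemma sigma_braid: "sigma i \<circ> (sigma (Suc i) \<circ> sigma i) = sigma (Suc i) \<circ> (sigma i \<circ> sigma (Suc i))"
  by (rule ext) (auto simp: sigma_apply)

lemma sigma_order: "a < b \<Longrightarrow> (a, b) \<noteq> (k, Suc k) \<Longrightarrow> sigma k a < sigma k b"
  by (auto simp: sigma_apply)

definition invs :: "nat \<Rightarrow> (nat \<Rightarrow> nat) \<Rightarrow> (nat \<times> nat) set" where
  "invs n x = {(a,b). a \<in> {1..n} \<and> b \<in> {1..n} \<and> a < b \<and> x b < x a}"

definition ninv :: "nat \<Rightarrow> (nat \<Rightarrow> nat) \<Rightarrow> nat" where
  "ninv n x = card (invs n x)"

lemma finite_invs[simp]: "finite (invs n x)"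
  by (rule finite_subset[of _ "{1..n} \<times> {1..n}"]) (auto simp: invs_def)

lemma invs_step:
  assumes k: "1 \<le> k" "k < n"
  shows "invs n (x \<circ> sigma k) - {(k, Suc k)} = (\<lambda>(a,b). (sigma k a, sigma k b)) ` (invs n x - {(k, Suc k)})"
proof -
  let ?f = "\<lambda>(a,b). (sigma k a, sigma k b)"
  have A: "?f p \<in> invs n (x \<circ> sigma k) - {(k, Suc k)}" if "p \<in> invs n x - {(k, Suc k)}" for p
  proof -
    obtain a b where p: "p = (a,b)" by (cases p)
    have ab: "a < b" "a \<in> {1..n}" "b \<in> {1..n}" using that p by (auto simp: invs_def)
    then have "sigma k a \<in> {1..n}" "sigma k b \<in> {1..n}" using k by (auto simp: sigma_apply)
    moreover have "sigma k a < sigma k b" using that p by (intro sigma_order) (auto simp: invs_def)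
    moreover have "(sigma k a, sigma k b) \<noteq> (k, Suc k)" using ab(1)
      by (auto simp: sigma_apply split: if_splits)
    ultimately show ?thesis using that p by (auto simp: invs_def)
  qed
  have B: "q \<in> ?f ` (invs n x - {(k, Suc k)})" if "q \<in> invs n (x \<circ> sigma k) - {(k, Suc k)}" for q
  proof -
    obtain a b where q: "q = (a,b)" by (cases q)
    have "(sigma k a, sigma k b) \<in> invs n x - {(k, Suc k)}"
    proof -
      have ab: "a < b" "a \<in> {1..n}" "b \<in> {1..n}" using that q by (auto simp: invs_def)
      then have "sigma k a \<in> {1..n}" "sigma k b \<in> {1..n}" using k by (auto simp: sigma_apply)
      moreover have "sigma k a < sigma k b" using that q by (intro sigma_order) (auto simp: invs_def)
      moreover have "(sigma k a, sigma k b) \<noteq> (k, Suc k)" using ab(1)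
        by (auto simp: sigma_apply split: if_splits)
      ultimately show ?thesis using that q by (auto simp: invs_def)
    qed
    moreover have "q = ?f (sigma k a, sigma k b)" using q by simp
    ultimately show ?thesis by (metis (no_types, lifting) image_eqI)
  qed
  show ?thesis
    by (rule equalityI, rule subsetI, erule B, rule image_subsetI, erule A)
qed

lemma ninv_step:
  assumes k: "1 \<le> k" "k < n"
  shows "x k < x (Suc k) \<Longrightarrow> ninv n (x \<circ> sigma k) = Suc (ninv n x)"
    and "x (Suc k) < x k \<Longrightarrow> Suc (ninv n (x \<circ> sigma k)) = ninv n x"
proof -
  let ?f = "\<lambda>(a,b). (sigma k a, sigma k b)"
  have inj: "inj_on ?f X" for X
    by (rule inj_onI) (auto simp: sigma_apply split: if_splits)
  have c: "card (invs n (x \<circ> sigma k) - {(k, Suc k)}) = card (invs n x - {(k, Suc k)})"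
    using invs_step[OF k, of x] card_image[OF inj] by metis
  have kin: "(k, Suc k) \<in> invs n (x \<circ> sigma k) \<longleftrightarrow> x k < x (Suc k)"
    using k by (auto simp: invs_def sigma_apply)
  have kin2: "(k, Suc k) \<in> invs n x \<longleftrightarrow> x (Suc k) < x k"
    using k by (auto simp: invs_def)
  show "x k < x (Suc k) \<Longrightarrow> ninv n (x \<circ> sigma k) = Suc (ninv n x)"
  proof -
    assume h: "x k < x (Suc k)"
    then have "(k, Suc k) \<notin> invs n x" using kin2 by simp
    then have "invs n x - {(k, Suc k)} = invs n x" by blast
    moreover have "card (invs n (x \<circ> sigma k)) = Suc (card (invs n (x \<circ> sigma k) - {(k, Suc k)}))"
      using kin h by (metis card_Suc_Diff1 finite_invs)
    ultimately show ?thesis using c by (simp add: ninv_def)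
  qed
  show "x (Suc k) < x k \<Longrightarrow> Suc (ninv n (x \<circ> sigma k)) = ninv n x"
  proof -
    assume h: "x (Suc k) < x k"
    then have "(k, Suc k) \<notin> invs n (x \<circ> sigma k)" using kin by simp
    then have "invs n (x \<circ> sigma k) - {(k, Suc k)} = invs n (x \<circ> sigma k)" by blast
    moreover have "card (invs n x) = Suc (card (invs n x - {(k, Suc k)}))"
      using kin2 h by (metis card_Suc_Diff1 finite_invs)
    ultimately show ?thesis using c by (simp add: ninv_def)
  qed
qed


lemma permutes_inj_neq: "p permutes S \<Longrightarrow> a \<noteq> b \<Longrightarrow> p a \<noteq> p b"
  by (metis permutes_inj injD)

lemma ninv_id[simp]: "ninv n id = 0" "ninv n (\<lambda>a. a) = 0"
proof -
  have "invs n id = {}" by (auto simp: invs_def)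
  then show "ninv n id = 0" by (simp add: ninv_def)
  then show "ninv n (\<lambda>a. a) = 0" by (simp add: id_def)
qed

lemma ninv_word: "is_word n s \<Longrightarrow> ninv n (word_perm s) \<le> length s"
proof (induction s rule: rev_induct)
  case Nil
  show ?case by simp
next
  case (snoc k s)
  let ?x = "word_perm s"
  have k: "1 \<le> k" "k < n" and ws: "is_word n s" using snoc.prems by auto
  have "?x k \<noteq> ?x (Suc k)" using permutes_inj_neq[OF word_perm_permutes[OF ws]] by simp
  then consider "?x k < ?x (Suc k)" | "?x (Suc k) < ?x k" by linarith
  then show ?case
  proof cases
    case 1 then show ?thesis using ninv_step(1)[OF k 1] snoc.IH[OF ws]
      by (simp only: word_perm_append word_perm_Cons word_perm_Nil comp_id length_append_singleton)
  next
    case 2 then show ?thesis using ninv_step(2)[OF k 2] snoc.IH[OF ws]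
      by (simp only: word_perm_append word_perm_Cons word_perm_Nil comp_id length_append_singleton)
  qed
qed

lemma ninv_zero_id:
  assumes p: "p permutes {1..n}" and z: "ninv n p = 0"
  shows "p = id"
proof -
  have e: "invs n p = {}" using z by (simp add: ninv_def)
  have mono: "p a < p b" if "a \<in> {1..n}" "b \<in> {1..n}" "a < b" for a b
  proof -
    have "(a,b) \<notin> invs n p" using e by simp
    then have "\<not> p b < p a" using that by (auto simp: invs_def)
    moreover have "p a \<noteq> p b" using permutes_inj_neq[OF p] that by simp
    ultimately show ?thesis by linarith
  qed
  have img: "p ` {1..n} = {1..n}" using permutes_image[OF p] .
  have pa: "p a = a" if a: "a \<in> {1..n}" for a
  proof -
    have "p a \<in> {1..n}" using img a by blast
    have c1: "card (p ` {1..<a}) = card {1..<a}"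
      by (rule card_image, rule inj_on_subset[OF permutes_inj_on[OF p]]) auto
    have "p ` {1..<a} \<subseteq> {1..<p a}"
    proof
      fix y assume "y \<in> p ` {1..<a}"
      then obtain c where c: "c \<in> {1..<a}" "y = p c" by blast
      then have "p c < p a" using mono[of c a] a by auto
      moreover have "p c \<in> {1..n}" using img c a by auto
      ultimately show "y \<in> {1..<p a}" using c by auto
    qed
    then have "card (p ` {1..<a}) \<le> card {1..<p a}" by (rule card_mono[rotated]) simp
    then have "a - 1 \<le> p a - 1" using c1 by simp
    then have le1: "a \<le> p a" using \<open>p a \<in> {1..n}\<close> a by auto
    have c2: "card (p ` {a<..n}) = card {a<..n}"
      by (rule card_image, rule inj_on_subset[OF permutes_inj_on[OF p]]) auto
    have "p ` {a<..n} \<subseteq> {p a<..n}"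
    proof
      fix y assume "y \<in> p ` {a<..n}"
      then obtain c where c: "c \<in> {a<..n}" "y = p c" by blast
      then have "p a < p c" using mono[of a c] a by auto
      moreover have "p c \<in> {1..n}" using img c a by auto
      ultimately show "y \<in> {p a<..n}" using c by auto
    qed
    then have "card (p ` {a<..n}) \<le> card {p a<..n}" by (rule card_mono[rotated]) simp
    then have "n - a \<le> n - p a" using c2 by simp
    then have le2: "p a \<le> a" using \<open>p a \<in> {1..n}\<close> a by auto
    from le1 le2 show ?thesis by simp
  qed
  show ?thesis
  proof
    fix a show "p a = id a"
      using pa permutes_not_in[OF p] by (cases "a \<in> {1..n}") auto
  qed
qed

lemma descent_exists:
  assumes p: "p permutes {1..n}" and z: "ninv n p \<noteq> 0"
  shows "\<exists>k. 1 \<le> k \<and> k < n \<and> p (Suc k) < p k"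
proof (rule ccontr)
  assume "\<not> ?thesis"
  then have asc: "p k < p (Suc k)" if "1 \<le> k" "k < n" for k
    using that permutes_inj_neq[OF p, of k "Suc k"] by fastforce
  have "p a < p (a + d + 1)" if "1 \<le> a" "a + d + 1 \<le> n" for a d
    using that
  proof (induction d)
    case 0 then show ?case using asc[of a] by simp
  next
    case (Suc d)
    then have "p a < p (a + d + 1)" by simp
    also have "\<dots> < p (a + Suc d + 1)" using asc[of "a + d + 1"] Suc.prems by simp
    finally show ?case .
  qed
  then have "invs n p = {}"
    by (auto simp: invs_def) (metis add.commute le_add1 less_imp_Suc_add plus_1_eq_Suc less_asym add_Suc_right)
  then show False using z by (simp add: ninv_def)
qed

lemma word_exists:
  "p permutes {1..n} \<Longrightarrow> \<exists>s. is_word n s \<and> word_perm s = p \<and> length s = ninv n p"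
proof (induction "ninv n p" arbitrary: p)
  case 0
  then have "p = id" using ninv_zero_id by simp
  then show ?case by (intro exI[of _ "[]"]) simp
next
  case (Suc m)
  obtain k where k: "1 \<le> k" "k < n" "p (Suc k) < p k"
    using descent_exists[OF Suc.prems] Suc.hyps(2) by auto
  have e: "Suc (ninv n (p \<circ> sigma k)) = ninv n p" using ninv_step(2)[OF k] by simp
  have "p \<circ> sigma k permutes {1..n}" using permutes_compose[OF sigma_permutes[OF k(1,2)] Suc.prems] .
  then obtain s where s: "is_word n s" "word_perm s = p \<circ> sigma k" "length s = ninv n (p \<circ> sigma k)"
    using Suc.hyps(1)[of "p \<circ> sigma k"] e Suc.hyps(2) by auto
  have "word_perm (s @ [k]) = p" using s(2) by (simp add: comp_assoc)
  then show ?case using s k e by (intro exI[of _ "s @ [k]"]) auto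
qed

lemma reduced_iff:
  "reduced_word n w s \<longleftrightarrow> is_word n s \<and> word_perm s = w \<and> length s = ninv n w"
proof
  assume r: "reduced_word n w s"
  then have ws: "is_word n s" "word_perm s = w" by (auto simp: reduced_word_def)
  then have "w permutes {1..n}" using word_perm_permutes by blast
  then obtain t where "is_word n t" "word_perm t = w" "length t = ninv n w" using word_exists by blast
  then have "length s \<le> ninv n w" using r by (auto simp: reduced_word_def)
  moreover have "ninv n w \<le> length s" using ninv_word[OF ws(1)] ws(2) by simp
  ultimately show "is_word n s \<and> word_perm s = w \<and> length s = ninv n w" using ws by simp
next
  assume "is_word n s \<and> word_perm s = w \<and> length s = ninv n w"
  then show "reduced_word n w s" using ninv_word by (auto simp: reduced_word_def) (metis)
qed


fun rk :: "(nat \<Rightarrow> nat) \<Rightarrow> nat \<Rightarrow> nat \<Rightarrow> nat" where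
  "rk x 0 q = 0"
| "rk x (Suc p) q = rk x p q + (if q \<le> x (Suc p) then 1 else 0)"

definition rle :: "(nat \<Rightarrow> nat) \<Rightarrow> (nat \<Rightarrow> nat) \<Rightarrow> bool" where
  "rle u w \<longleftrightarrow> (\<forall>p q. rk u p q \<le> rk w p q)"

lemma rle_refl: "rle u u" by (simp add: rle_def)
lemma rle_trans: "rle u v \<Longrightarrow> rle v w \<Longrightarrow> rle u w"
  unfolding rle_def by (meson le_trans)

lemma rk_comp_sigma:
  assumes "1 \<le> k"
  shows "rk (x \<circ> sigma k) p q =
    (if p = k then rk x (k - 1) q + (if q \<le> x (Suc k) then 1 else 0) else rk x p q)"
proof (induction p)
  case 0 then show ?case using assms by simp
next
  case (Suc p)
  obtain K where K: "k = Suc K" using assms by (cases k) auto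
  consider "Suc p < k" | "Suc p = k" | "Suc p = Suc k" | "Suc p > Suc k" by linarith
  then show ?case
  proof cases
    case 1 then show ?thesis using Suc by (auto simp: sigma_apply)
  next
    case 2 then show ?thesis using Suc by (auto simp: sigma_apply)
  next
    case 3 then show ?thesis using Suc K by (auto simp: sigma_apply)
  next
    case 4 then show ?thesis using Suc by (auto simp: sigma_apply)
  qed
qed

lemma rk_Suc_Suc: "rk x (Suc (Suc K)) q = rk x K q + (if q \<le> x (Suc K) then 1 else 0) + (if q \<le> x (Suc (Suc K)) then 1 else 0)"
  by simp

lemma rle_up:
  assumes "1 \<le> k" "x k < x (Suc k)"
  shows "rle x (x \<circ> sigma k)"
  unfolding rle_def
proof (intro allI)
  fix p q
  obtain K where K: "k = Suc K" using assms by (cases k) auto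
  show "rk x p q \<le> rk (x \<circ> sigma k) p q"
    using assms K by (auto simp: rk_comp_sigma)
qed

lemma rle_lift:
  assumes "1 \<le> k" "rle u w" "w k < w (Suc k)"
  shows "rle (u \<circ> sigma k) (w \<circ> sigma k)"
  unfolding rle_def
proof (intro allI)
  fix p q
  obtain K where K: "k = Suc K" using assms by (cases k) auto
  have h: "rk u p' q' \<le> rk w p' q'" for p' q' using assms(2) by (simp add: rle_def)
  have h1: "rk u K q \<le> rk w K q" using h by simp
  have h2: "rk u (Suc (Suc K)) q \<le> rk w (Suc (Suc K)) q" using h by blast
  show "rk (u \<circ> sigma k) p q \<le> rk (w \<circ> sigma k) p q"
  proof (cases "p = k")
    case False then show ?thesis using h assms(1) by (simp add: rk_comp_sigma)
  next
    case True
    have e1: "rk (u \<circ> sigma k) p q = rk u K q + (if q \<le> u (Suc k) then 1 else 0)"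
      using rk_comp_sigma[OF assms(1), of u p q] True K by (simp del: rk.simps)
    have e2: "rk (w \<circ> sigma k) p q = rk w K q + (if q \<le> w (Suc k) then 1 else 0)"
      using rk_comp_sigma[OF assms(1), of w p q] True K by (simp del: rk.simps)
    have h2': "rk u K q + (if q \<le> u k then 1 else 0) + (if q \<le> u (Suc k) then 1 else 0)
       \<le> rk w K q + (if q \<le> w k then 1 else 0) + (if q \<le> w (Suc k) then 1 else 0)"
      using h2 K by simp
    show ?thesis unfolding e1 e2 using h1 h2' assms(3) by (auto split: if_splits)
  qed
qed

lemma rle_down:
  assumes "1 \<le> k" "rle u w" "u (Suc k) < u k" "w (Suc k) < w k"
  shows "rle (u \<circ> sigma k) (w \<circ> sigma k)"
  unfolding rle_def
proof (intro allI)
  fix p q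
  obtain K where K: "k = Suc K" using assms by (cases k) auto
  have h: "rk u p' q' \<le> rk w p' q'" for p' q' using assms(2) by (simp add: rle_def)
  have h1: "rk u K q \<le> rk w K q" using h by simp
  have h2: "rk u (Suc (Suc K)) q \<le> rk w (Suc (Suc K)) q" using h by blast
  show "rk (u \<circ> sigma k) p q \<le> rk (w \<circ> sigma k) p q"
  proof (cases "p = k")
    case False then show ?thesis using h assms(1) by (simp add: rk_comp_sigma)
  next
    case True
    have e1: "rk (u \<circ> sigma k) p q = rk u K q + (if q \<le> u (Suc k) then 1 else 0)"
      using rk_comp_sigma[OF assms(1), of u p q] True K by (simp del: rk.simps)
    have e2: "rk (w \<circ> sigma k) p q = rk w K q + (if q \<le> w (Suc k) then 1 else 0)"
      using rk_comp_sigma[OF assms(1), of w p q] True K by (simp del: rk.simps)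
    have h2': "rk u K q + (if q \<le> u k then 1 else 0) + (if q \<le> u (Suc k) then 1 else 0)
       \<le> rk w K q + (if q \<le> w k then 1 else 0) + (if q \<le> w (Suc k) then 1 else 0)"
      using h2 K by simp
    show ?thesis unfolding e1 e2 using h1 h2' assms(3,4) by (auto split: if_splits)
  qed
qed

lemma rle_mixed:
  assumes "1 \<le> k" "rle u w" "u k < u (Suc k)" "w (Suc k) < w k"
  shows "rle u (w \<circ> sigma k)"
  unfolding rle_def
proof (intro allI)
  fix p q
  obtain K where K: "k = Suc K" using assms by (cases k) auto
  have h: "rk u p' q' \<le> rk w p' q'" for p' q' using assms(2) by (simp add: rle_def)
  have h1: "rk u K q \<le> rk w K q" using h by simp
  have h2: "rk u (Suc (Suc K)) q \<le> rk w (Suc (Suc K)) q" using h by blast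
  show "rk u p q \<le> rk (w \<circ> sigma k) p q"
  proof (cases "p = k")
    case False then show ?thesis using h assms(1) by (simp add: rk_comp_sigma)
  next
    case True
    have e2: "rk (w \<circ> sigma k) p q = rk w K q + (if q \<le> w (Suc k) then 1 else 0)"
      using rk_comp_sigma[OF assms(1), of w p q] True K by (simp del: rk.simps)
    have e1: "rk u p q = rk u K q + (if q \<le> u k then 1 else 0)"
      using True K by simp
    have h2': "rk u K q + (if q \<le> u k then 1 else 0) + (if q \<le> u (Suc k) then 1 else 0)
       \<le> rk w K q + (if q \<le> w k then 1 else 0) + (if q \<le> w (Suc k) then 1 else 0)"
      using h2 K by simp
    show ?thesis unfolding e1 e2 using h1 h2' assms(3,4) by (auto split: if_splits)
  qed
qed

lemma rk_id_zero': "p < q \<Longrightarrow> rk id p q = 0"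
  by (induction p) auto

lemma rk_id_zero: "rk id p (Suc p) = 0"
  by (simp add: rk_id_zero')

lemma rk_zero_bound: "rk x p q = 0 \<Longrightarrow> 1 \<le> c \<Longrightarrow> c \<le> p \<Longrightarrow> x c < q"
proof (induction p)
  case 0 then show ?case by simp
next
  case (Suc p)
  then show ?case by (cases "c = Suc p") (auto split: if_splits)
qed

lemma rle_id:
  assumes u: "u permutes {1..n}" and r: "rle u id"
  shows "u = id"
proof -
  have le: "u c \<le> c" if "1 \<le> c" for c
  proof -
    have "rk u c (Suc c) = 0" using r rk_id_zero[of c] by (metis le_zero_eq rle_def)
    then show ?thesis using rk_zero_bound[of u c "Suc c" c] that by simp
  qed
  have u0: "u 0 = 0" using permutes_not_in[OF u] by simp
  have "u c = c" for c
  proof (induction c rule: less_induct)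
    case (less c)
    show ?case
    proof (cases "c = 0")
      case True then show ?thesis using u0 by simp
    next
      case False
      then have "u c \<le> c" using le by simp
      moreover have "u c \<noteq> c \<Longrightarrow> False"
      proof -
        assume ne: "u c \<noteq> c"
        then have "u c < c" using \<open>u c \<le> c\<close> by simp
        then have "u (u c) = u c" using less by simp
        then show False using ne permutes_inj_neq[OF u, of "u c" c] by simp
      qed
      ultimately show ?thesis by blast
    qed
  qed
  then show ?thesis by auto
qed

lemma reduced_snoc:
  assumes "reduced_word n w (s @ [k])"
  shows "reduced_word n (word_perm s) s" "word_perm s k < word_perm s (Suc k)" "1 \<le> k" "k < n"
    "w = word_perm s \<circ> sigma k"
proof -
  have r: "is_word n (s @ [k])" "word_perm (s @ [k]) = w" "length (s @ [k]) = ninv n w"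
    using assms by (auto simp: reduced_iff)
  then show k: "1 \<le> k" "k < n" by auto
  have ws: "is_word n s" using r by simp
  show w: "w = word_perm s \<circ> sigma k" using r(2) by simp
  have le: "ninv n (word_perm s) \<le> length s" using ninv_word[OF ws] .
  have ne: "word_perm s k \<noteq> word_perm s (Suc k)"
    using permutes_inj_neq[OF word_perm_permutes[OF ws]] by simp
  show asc: "word_perm s k < word_perm s (Suc k)"
  proof (rule ccontr)
    assume "\<not> ?thesis"
    then have "word_perm s (Suc k) < word_perm s k" using ne by simp
    then have "Suc (ninv n w) = ninv n (word_perm s)" using ninv_step(2)[OF k] w by simp
    then show False using le r(3) by simp
  qed
  have "ninv n w = Suc (ninv n (word_perm s))" using ninv_step(1)[OF k asc] w by simp
  then have "length s = ninv n (word_perm s)" using r(3) by simp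
  then show "reduced_word n (word_perm s) s" using ws by (simp add: reduced_iff)
qed

lemma subseq_singleton_right:
  assumes h: "subseq r [k]" shows "r = [] \<or> r = [k]"
proof (cases r)
  case Nil then show ?thesis by blast
next
  case (Cons a r')
  have "length r \<le> 1" using list_emb_length[OF h] by simp
  then have r': "r' = []" using Cons by simp
  then have "subseq [a] [k]" using h Cons by simp
  then have "a = k" unfolding subseq_singleton_left by simp
  then show ?thesis using Cons r' by simp
qed

lemma subword_rle:
  "reduced_word n w s \<Longrightarrow> subseq r s \<Longrightarrow> rle (word_perm r) w"
proof (induction s arbitrary: r w rule: rev_induct)
  case Nil
  have "w = id" using Nil(1) unfolding reduced_iff by simp
  moreover have "r = []" using list_emb_Nil2[OF Nil(2)] .
  ultimately show ?case by (simp add: rle_refl)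
next
  case (snoc k s)
  note rs = reduced_snoc[OF snoc.prems(1)]
  obtain r1 r2 where r: "r = r1 @ r2" "subseq r1 s" "subseq r2 [k]"
    using snoc.prems(2) by (rule subseq_appendE)
  have IH: "rle (word_perm r1) (word_perm s)" using snoc.IH[OF rs(1) r(2)] .
  from subseq_singleton_right[OF r(3)] show ?case
  proof
    assume "r2 = []"
    then have "word_perm r = word_perm r1" using r(1) by simp
    then show ?thesis unfolding rs(5) by (simp only:) (rule rle_trans[OF IH rle_up[OF rs(3) rs(2)]])
  next
    assume "r2 = [k]"
    then have "word_perm r = word_perm r1 \<circ> sigma k" using r(1) by simp
    then show ?thesis unfolding rs(5) by (simp only:) (rule rle_lift[OF rs(3) IH rs(2)])
  qed
qed

lemma rle_subword:
  "reduced_word n w s \<Longrightarrow> u permutes {1..n} \<Longrightarrow> rle u w \<Longrightarrow> \<exists>r. reduced_word n u r \<and> subseq r s"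
proof (induction s arbitrary: u w rule: rev_induct)
  case Nil
  have "w = id" using Nil(1) unfolding reduced_iff by simp
  then have "u = id" using rle_id[of u n] Nil(2,3) by metis
  then show ?case by (intro exI[of _ "[]"]) (simp add: reduced_iff id_def)
next
  case (snoc k s)
  note rs = reduced_snoc[OF snoc.prems(1)]
  let ?ws = "word_perm s"
  have k: "1 \<le> k" "k < n" using rs by auto
  have wdesc: "w (Suc k) < w k" using rs(2) rs(5) by (simp add: sigma_apply)
  have wss: "w \<circ> sigma k = ?ws" using rs(5) by (simp add: comp_assoc)
  have ne: "u k \<noteq> u (Suc k)" using permutes_inj_neq[OF snoc.prems(2)] by simp
  then consider "u (Suc k) < u k" | "u k < u (Suc k)" by linarith
  then show ?case
  proof cases
    case 1
    have "rle (u \<circ> sigma k) ?ws" using rle_down[OF k(1) snoc.prems(3) 1 wdesc] wss by simp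
    moreover have up: "u \<circ> sigma k permutes {1..n}"
      using permutes_compose[OF sigma_permutes[OF k] snoc.prems(2)] .
    ultimately obtain r' where r': "reduced_word n (u \<circ> sigma k) r'" "subseq r' s"
      using snoc.IH[OF rs(1)] by blast
    have e: "Suc (ninv n (u \<circ> sigma k)) = ninv n u" using ninv_step(2)[OF k 1] .
    have "word_perm (r' @ [k]) = u"
      using r'(1) unfolding reduced_iff by (simp add: comp_assoc)
    moreover have "is_word n (r' @ [k])" using r'(1) k unfolding reduced_iff by simp
    moreover have "length (r' @ [k]) = ninv n u" using r'(1) e unfolding reduced_iff by simp
    ultimately have "reduced_word n u (r' @ [k])" unfolding reduced_iff by blast
    moreover have "subseq (r' @ [k]) (s @ [k])" using r'(2) by simp
    ultimately show ?thesis by blast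
  next
    case 2
    have "rle u ?ws" using rle_mixed[OF k(1) snoc.prems(3) 2 wdesc] wss by simp
    then obtain r where "reduced_word n u r" "subseq r s"
      using snoc.IH[OF rs(1) snoc.prems(2)] by blast
    then show ?thesis using subseq_rev_drop_many[of r s "[k]"] by blast
  qed
qed

lemma subword_property:
  assumes "bruhat_le n u w" "reduced_word n w s"
  shows "\<exists>r. reduced_word n u r \<and> subseq r s"
proof -
  obtain su sw where h: "reduced_word n u su" "reduced_word n w sw" "subseq su sw"
    using assms(1) by (auto simp: bruhat_le_def)
  have wu: "word_perm su = u" using h(1) by (simp add: reduced_word_def)
  have rl: "rle u w" using subword_rle[OF h(2,3)] unfolding wu .
  have "u permutes {1..n}" using h(1) word_perm_permutes unfolding reduced_word_def by blast
  from rle_subword[OF assms(2) this rl] show ?thesis .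
qed

lemma bruhat_trans:
  assumes "bruhat_le n u v" "bruhat_le n v w"
  shows "bruhat_le n u w"
proof -
  obtain sv sw where h: "reduced_word n v sv" "reduced_word n w sw" "subseq sv sw"
    using assms(2) by (auto simp: bruhat_le_def)
  obtain r where "reduced_word n u r" "subseq r sv" using subword_property[OF assms(1) h(1)] by blast
  then show ?thesis unfolding bruhat_le_def
    using h(2) subseq_order.order_trans[of r sv sw] h(3) by blast
qed


section \<open>Basic Bruhat facts\<close>

lemma reduced_perm: "reduced_word n x r \<Longrightarrow> x permutes {1..n}"
  unfolding reduced_word_def using word_perm_permutes by blast

lemma bruhat_perm: "bruhat_le n x y \<Longrightarrow> x permutes {1..n}"
  unfolding bruhat_le_def using reduced_perm by blast

lemma bruhat_red1: "bruhat_le n x y \<Longrightarrow> \<exists>r. reduced_word n x r"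
  unfolding bruhat_le_def by blast
lemma bruhat_red2: "bruhat_le n x y \<Longrightarrow> \<exists>r. reduced_word n y r"
  unfolding bruhat_le_def by blast

lemma bruhat_refl: "reduced_word n x r \<Longrightarrow> bruhat_le n x x"
  unfolding bruhat_le_def by blast

lemma bruhat_refl1: "bruhat_le n x y \<Longrightarrow> bruhat_le n x x"
  using bruhat_red1 bruhat_refl by blast
lemma bruhat_refl2: "bruhat_le n x y \<Longrightarrow> bruhat_le n y y"
  using bruhat_red2 bruhat_refl by blast

lemma bruhat_antisym:
  assumes "bruhat_le n x y" "bruhat_le n y x" shows "x = y"
proof -
  obtain sx sy where h: "reduced_word n x sx" "reduced_word n y sy" "subseq sx sy"
    using assms(1) unfolding bruhat_le_def by blast
  obtain sy' sx' where h': "reduced_word n y sy'" "reduced_word n x sx'" "subseq sy' sx'"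
    using assms(2) unfolding bruhat_le_def by blast
  have "length sx \<le> length sy" using list_emb_length[OF h(3)] .
  moreover have "length sy' \<le> length sx'" using list_emb_length[OF h'(3)] .
  moreover have "length sx = ninv n x" "length sx' = ninv n x" "length sy = ninv n y" "length sy' = ninv n y"
    using h h' unfolding reduced_iff by auto
  ultimately have "length sx = length sy" by simp
  then have "sx = sy" using subseq_same_length[OF h(3)] by simp
  then show ?thesis using h unfolding reduced_word_def by blast
qed

lemma reduced_id: "reduced_word n id []"
  unfolding reduced_iff by simp

lemma bruhat_id: "reduced_word n x r \<Longrightarrow> bruhat_le n id x"
  unfolding bruhat_le_def using reduced_id by blast

lemma bruhat_id': "bruhat_le n x y \<Longrightarrow> bruhat_le n id y"
  using bruhat_red2 bruhat_id by blast

lemma reduced_snoc_intro: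
  assumes "reduced_word n w s" "1 \<le> k" "k < n" "w k < w (Suc k)"
  shows "reduced_word n (w \<circ> sigma k) (s @ [k])"
proof -
  have "ninv n (w \<circ> sigma k) = Suc (ninv n w)" using ninv_step(1)[OF assms(2,3,4)] .
  then show ?thesis using assms unfolding reduced_iff by simp
qed

lemma reduced_single: "1 \<le> m \<Longrightarrow> m < n \<Longrightarrow> reduced_word n (sigma m) [m]"
  using reduced_snoc_intro[OF reduced_id, of m n] by simp

lemma sigma_neq_id: "sigma m \<noteq> id"
proof
  assume "sigma m = id"
  then have "sigma m m = m" by simp
  then show False by (simp add: sigma_apply)
qed

lemma sigma_inj: "sigma m = sigma m' \<Longrightarrow> m = m'"
proof -
  assume "sigma m = sigma m'"
  then have "sigma m m = sigma m' m" by simp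
  then show ?thesis by (auto simp: sigma_apply split: if_splits)
qed

lemma reduced_sigma_unique:
  assumes "reduced_word n (sigma m) r" shows "r = [m]"
proof -
  have r: "is_word n r" "word_perm r = sigma m" "length r = ninv n (sigma m)"
    using assms unfolding reduced_iff by auto
  have "reduced_word n (sigma m) [m]"
  proof -
    have perm: "sigma m permutes {1..n}" using r word_perm_permutes by metis
    have m1: "m \<in> {1..n}"
    proof (rule ccontr)
      assume "m \<notin> {1..n}"
      then have "sigma m m = m" using permutes_not_in[OF perm] by blast
      then show False by (simp add: sigma_apply)
    qed
    have m2: "Suc m \<in> {1..n}"
    proof (rule ccontr)
      assume "Suc m \<notin> {1..n}"
      then have "sigma m (Suc m) = Suc m" using permutes_not_in[OF perm] by blast
      then show False by (simp add: sigma_apply)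
    qed
    have "m \<in> {1..<n}" using m1 m2 by simp
    then show ?thesis using reduced_single by auto
  qed
  then have "ninv n (sigma m) = 1" unfolding reduced_iff by simp
  then obtain m' where m': "r = [m']" using r(3) by (cases r) auto
  then have "sigma m' = sigma m" using r(2) by simp
  then show ?thesis using m' sigma_inj by simp
qed

lemma atom_iff:
  assumes "reduced_word n x s"
  shows "bruhat_le n (sigma m) x \<longleftrightarrow> m \<in> set s"
proof
  assume "bruhat_le n (sigma m) x"
  then obtain r where "reduced_word n (sigma m) r" "subseq r s" using subword_property assms by blast
  then show "m \<in> set s" using reduced_sigma_unique subseq_singleton_left by metis
next
  assume m: "m \<in> set s"
  then have "1 \<le> m" "m < n" using assms unfolding reduced_word_def is_word_def by auto
  then have "reduced_word n (sigma m) [m]" by (rule reduced_single)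
  moreover have "subseq [m] s" using m subseq_singleton_left by metis
  ultimately show "bruhat_le n (sigma m) x" using assms unfolding bruhat_le_def by blast
qed

lemma atom_supp:
  assumes "bruhat_le n x y"
  shows "bruhat_le n (sigma m) x \<longleftrightarrow> m \<in> supp n x"
proof -
  obtain s where s: "reduced_word n x s" using bruhat_red1[OF assms] by blast
  show ?thesis
  proof
    assume "bruhat_le n (sigma m) x"
    then show "m \<in> supp n x" using atom_iff[OF s] s unfolding supp_def by blast
  next
    assume "m \<in> supp n x"
    then obtain s' where "reduced_word n x s'" "m \<in> set s'" unfolding supp_def by blast
    then show "bruhat_le n (sigma m) x" using atom_iff by blast
  qed
qed

lemma supp_mono:
  assumes "bruhat_le n x y" "m \<in> supp n x" shows "m \<in> supp n y"
proof -
  have "bruhat_le n (sigma m) x" using atom_supp[OF assms(1)] assms(2) by blast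
  then have "bruhat_le n (sigma m) y" using bruhat_trans assms(1) by blast
  then show ?thesis using atom_supp[OF bruhat_refl2[OF assms(1)]] by blast
qed

lemma sigma_le_sigma:
  "bruhat_le n (sigma k) (sigma m) \<Longrightarrow> k = m"
proof -
  assume h: "bruhat_le n (sigma k) (sigma m)"
  obtain r where "reduced_word n (sigma m) r" using bruhat_red2[OF h] by blast
  then have "reduced_word n (sigma m) [m]" using reduced_sigma_unique by metis
  then have "k \<in> set [m]" using atom_iff h by blast
  then show ?thesis by simp
qed


section \<open>The rank-3 element\<close>

definition adj :: "nat \<Rightarrow> nat \<Rightarrow> bool" where
  "adj x y \<longleftrightarrow> y = Suc x \<or> x = Suc y"

lemma adj_sym: "adj x y \<Longrightarrow> adj y x" by (auto simp: adj_def)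
lemma adj_neq: "adj x y \<Longrightarrow> x \<noteq> y" by (auto simp: adj_def)

lemma wp2: "word_perm [x, y] = sigma x \<circ> sigma y" by simp
lemma wp3: "word_perm [x, y, z] = sigma x \<circ> sigma y \<circ> sigma z" by (simp add: comp_assoc)

lemma red2:
  assumes "adj x y" "x \<in> {1..<n}" "y \<in> {1..<n}"
  shows "reduced_word n (word_perm [x, y]) [x, y]"
proof -
  have "sigma x y < sigma x (Suc y)" using assms(1) by (auto simp: adj_def sigma_apply)
  then have "reduced_word n (sigma x \<circ> sigma y) ([x] @ [y])"
    using reduced_snoc_intro[OF reduced_single] assms by auto
  then show ?thesis by simp
qed

lemma red3:
  assumes "adj x y" "x \<in> {1..<n}" "y \<in> {1..<n}"
  shows "reduced_word n (word_perm [x, y, x]) [x, y, x]"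
proof -
  have "(sigma x \<circ> sigma y) x < (sigma x \<circ> sigma y) (Suc x)" using assms(1) by (auto simp: adj_def sigma_apply)
  then have "reduced_word n (sigma x \<circ> sigma y \<circ> sigma x) ([x, y] @ [x])"
    using reduced_snoc_intro[OF red2[OF assms]] assms unfolding wp2 by auto
  then show ?thesis unfolding wp3 by simp
qed

lemma braid: "adj x y \<Longrightarrow> word_perm [x, y, x] = word_perm [y, x, y]"
  unfolding wp3 by (rule ext) (auto simp: adj_def sigma_apply)

lemma red_ninv: "reduced_word n w s \<Longrightarrow> ninv n w = length s"
  unfolding reduced_iff by simp

lemma enum_low:
  assumes "adj x y" "reduced_word n u r" "subseq r [x, y, x]" "x \<notin> set r"
  shows "u = id \<or> u = sigma y"
proof -
  have "subseq (filter (\<lambda>a. a \<noteq> x) r) (filter (\<lambda>a. a \<noteq> x) [x, y, x])"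
    using subseq_filter[OF assms(3)] .
  moreover have "filter (\<lambda>a. a \<noteq> x) r = r" using assms(4) by (auto simp: filter_id_conv)
  moreover have "filter (\<lambda>a. a \<noteq> x) [x, y, x] = [y]" using adj_neq[OF assms(1)] by auto
  ultimately have "subseq r [y]" by simp
  then have "r = [] \<or> r = [y]" by (rule subseq_singleton_right)
  then show ?thesis using assms(2) unfolding reduced_word_def by auto
qed

lemma four_distinct:
  assumes "adj x y" "x \<in> {1..<n}" "y \<in> {1..<n}"
  shows "card {word_perm [x], word_perm [x, y], word_perm [y, x], word_perm [x, y, x]} = 4"
proof -
  have n1: "ninv n (word_perm [x]) = 1" using red_ninv[OF reduced_single, of x n] assms by simp
  have n2: "ninv n (word_perm [x, y]) = 2" using red_ninv[OF red2[OF assms]] by simp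
  have n2': "ninv n (word_perm [y, x]) = 2" using red_ninv[OF red2[OF adj_sym[OF assms(1)] assms(3,2)]] by simp
  have n3: "ninv n (word_perm [x, y, x]) = 3" using red_ninv[OF red3[OF assms]] by simp
  have d: "word_perm [x, y] \<noteq> word_perm [y, x]"
  proof
    assume "word_perm [x, y] = word_perm [y, x]"
    then have "(sigma x \<circ> sigma y) x = (sigma y \<circ> sigma x) x" unfolding wp2 by simp
    then show False using assms(1) by (auto simp: adj_def sigma_apply)
  qed
  have ne: "word_perm [x] \<noteq> word_perm [x, y]" "word_perm [x] \<noteq> word_perm [y, x]"
    "word_perm [x] \<noteq> word_perm [x, y, x]" "word_perm [x, y] \<noteq> word_perm [x, y, x]"
    "word_perm [y, x] \<noteq> word_perm [x, y, x]"
    using n1 n2 n2' n3 by (metis numeral_eq_one_iff semiring_norm(85) num.simps(4) one_neq_zero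
       numeral_eq_iff semiring_norm(86) semiring_norm(89) num.distinct(1) num.inject(2))+
  show ?thesis using ne d by simp
qed




lemma ideal_iff: "x \<in> bruhat_ideal n w \<longleftrightarrow> bruhat_le n x w"
  unfolding bruhat_ideal_def using bruhat_perm by blast

lemma finite_ideal: "finite (bruhat_ideal n w)"
proof -
  have "bruhat_ideal n w \<subseteq> {p. p permutes {1..n}}" unfolding bruhat_ideal_def by blast
  moreover have "finite {p. p permutes {1..n}}" by (rule finite_permutations) simp
  ultimately show ?thesis by (rule finite_subset)
qed

lemma main_lemma:
  fixes n i j :: nat
  assumes ij: "i \<in> {1..<n}" "j \<in> {1..<n}" "adj i j"
  shows "bruhat_le n v w \<Longrightarrow> i \<notin> supp n v \<Longrightarrow> supp n w - {i} \<subseteq> supp n v \<Longrightarrow>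
    iso_two_times n w v \<Longrightarrow> bruhat_le n (word_perm [i, j, i]) w \<Longrightarrow> False"
proof (induction "card (bruhat_ideal n w)" arbitrary: w v rule: less_induct)
  case less
  let ?le = "bruhat_le n"
  let ?P = "bruhat_ideal n w"
  let ?Q = "bruhat_ideal n v"
  define t where "t = word_perm [i, j, i]"
  have vw: "?le v w" and inv: "i \<notin> supp n v" and supw: "supp n w - {i} \<subseteq> supp n v"
    and tw: "?le t w" using less.prems t_def by auto
  obtain f :: "(nat \<Rightarrow> nat) \<Rightarrow> bool \<times> (nat \<Rightarrow> nat)" where fb: "bij_betw f ?P (UNIV \<times> ?Q)" and
    ford0: "\<forall>x\<in>?P. \<forall>y\<in>?P. ?le x y \<longleftrightarrow> (fst (f x) \<le> fst (f y) \<and> ?le (snd (f x)) (snd (f y)))"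
    using less.prems(4) unfolding iso_two_times_def by blast
  have ford: "?le x y \<longleftrightarrow> (fst (f x) \<le> fst (f y) \<and> ?le (snd (f x)) (snd (f y)))"
    if "x \<in> ?P" "y \<in> ?P" for x y using ford0 that by blast
  define g where "g = the_inv_into ?P f"
  have finj: "inj_on f ?P" using bij_betw_imp_inj_on[OF fb] .
  have fimg: "f ` ?P = UNIV \<times> ?Q" using bij_betw_imp_surj_on[OF fb] .
  have pimg: "p \<in> f ` ?P" if "snd p \<in> ?Q" for p
    using that unfolding fimg by (simp add: mem_Times_iff)
  have gin: "g p \<in> ?P" if "snd p \<in> ?Q" for p
    unfolding g_def using the_inv_into_into[OF finj pimg[OF that] subset_refl] .
  have fg: "f (g p) = p" if "snd p \<in> ?Q" for p
    unfolding g_def using f_the_inv_into_f[OF finj pimg[OF that]] .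
  have gf: "g (f x) = x" if "x \<in> ?P" for x
    unfolding g_def using the_inv_into_f_f[OF finj that] .
  have fQ: "snd (f x) \<in> ?Q" if "x \<in> ?P" for x
  proof -
    have "f x \<in> UNIV \<times> ?Q" using fimg that by blast
    then show ?thesis by (simp add: mem_Times_iff)
  qed
  have QP: "?Q \<subseteq> ?P"
  proof
    fix x assume "x \<in> ?Q"
    then have "?le x v" by (simp add: ideal_iff)
    then have "?le x w" using bruhat_trans vw by blast
    then show "x \<in> ?P" by (simp add: ideal_iff)
  qed
  have Qle: "?le q v" if "q \<in> ?Q" for q using that ideal_iff by blast
  have Pw: "?le x w" if "x \<in> ?P" for x using that ideal_iff by blast
  have idle: "?le id x" if "x \<in> ?P" for x using bruhat_id'[OF bruhat_refl1[OF Pw[OF that]]] .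
  have idQ: "id \<in> ?Q" using bruhat_id'[OF bruhat_refl1[OF vw]] unfolding ideal_iff .
  have refl: "?le x x" if "x \<in> ?P" for x using bruhat_refl1[OF Pw[OF that]] .
  have idP: "id \<in> ?P" using idQ QP by blast
  have fid: "f id = (False, id)"
  proof -
    obtain b0 q0 where b0: "f id = (b0, q0)" by (cases "f id")
    have q0Q: "q0 \<in> ?Q" using fQ[OF idP] b0 by simp
    have "?le id (g (False, id))" using idle gin idQ by simp
    then have "b0 \<le> False \<and> ?le q0 id"
      using ford[OF idP gin[of "(False, id)"]] fg[of "(False, id)"] idQ b0 by simp
    moreover have "?le id q0" using idle q0Q QP by blast
    ultimately show ?thesis using bruhat_antisym b0 by auto
  qed
  define a where "a = g (True, id)"
  have aP: "a \<in> ?P" using gin idQ a_def by simp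
  have fa: "f a = (True, id)" using fg idQ a_def by simp
  have "a \<noteq> id" using fa fid by auto
  obtain r where r: "reduced_word n a r" using bruhat_red1[OF Pw[OF aP]] by blast
  have "r \<noteq> []"
  proof
    assume "r = []"
    then have "a = id" using r unfolding reduced_iff by simp
    then show False using \<open>a \<noteq> id\<close> by simp
  qed
  then obtain k where kr: "k \<in> set r" by (cases r) auto
  have ska: "?le (sigma k) a" using atom_iff[OF r] kr by blast
  have skP: "sigma k \<in> ?P" using bruhat_trans[OF ska Pw[OF aP]] ideal_iff by blast
  have fsk: "f (sigma k) = (True, id)"
  proof -
    obtain b z where bz: "f (sigma k) = (b, z)" by (cases "f (sigma k)")
    have zQ: "z \<in> ?Q" using fQ[OF skP] bz by simp
    have "?le z id" using ford[OF skP aP] ska fa bz by simp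
    moreover have "?le id z" using idle zQ QP by blast
    ultimately have z: "z = id" using bruhat_antisym by blast
    have "b \<noteq> False"
    proof
      assume "b = False"
      then have "f (sigma k) = f id" using bz z fid by simp
      then have "sigma k = id" using finj skP idP inj_on_def by metis
      then show False using sigma_neq_id by blast
    qed
    then show ?thesis using bz z by simp
  qed
  have layer: "fst (f x) \<longleftrightarrow> ?le (sigma k) x" if "x \<in> ?P" for x
  proof -
    have "?le id (snd (f x))" using idle fQ[OF that] QP by blast
    then show ?thesis using ford[OF skP that] fsk by simp
  qed
  have tP: "t \<in> ?P" using tw ideal_iff by blast
  have redt: "reduced_word n t [i, j, i]" using red3[OF ij(3) ij(1,2)] t_def by simp
  have sit: "?le (sigma i) t" using atom_iff[OF redt] by simp
  have ftF: "\<not> fst (f t)"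
  proof
    assume T: "fst (f t)"
    then have skt: "?le (sigma k) t" using layer[OF tP] by simp
    then have "k \<in> set [i, j, i]" using atom_iff[OF redt] by blast
    then have "k = i \<or> k = j" by auto
    then obtain x y where xy: "adj x y" "x \<in> {1..<n}" "y \<in> {1..<n}" "x = k" "t = word_perm [x, y, x]"
    proof
      assume "k = i" then show ?thesis using that[OF ij(3) ij(1) ij(2) _ t_def] by simp
    next
      assume "k = j"
      moreover have "t = word_perm [j, i, j]" using t_def braid[OF ij(3)] by simp
      ultimately show ?thesis using that[OF adj_sym[OF ij(3)] ij(2) ij(1)] by simp
    qed
    have redt': "reduced_word n t [x, y, x]" using red3[OF xy(1-3)] xy(5) by simp
    define S4 where "S4 = {word_perm [x], word_perm [x, y], word_perm [y, x], word_perm [x, y, x]}"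
    have cS4: "card S4 = 4" unfolding S4_def using four_distinct[OF xy(1-3)] .
    have S4prop: "?le u t \<and> ?le (sigma x) u" if "u \<in> S4" for u
    proof -
      have rx: "reduced_word n (word_perm [x]) [x]" using reduced_single xy by simp
      have rxy: "reduced_word n (word_perm [x, y]) [x, y]" using red2[OF xy(1-3)] .
      have ryx: "reduced_word n (word_perm [y, x]) [y, x]" using red2[OF adj_sym[OF xy(1)] xy(3,2)] .
      have rxyx: "reduced_word n (word_perm [x, y, x]) [x, y, x]" using red3[OF xy(1-3)] .
      have sub: "?le u' t" if "reduced_word n u' su" "subseq su [x, y, x]" for u' su
        using that redt' unfolding bruhat_le_def by blast
      have s1: "subseq [x] [x, y, x]" by simp
      have s2: "subseq [x, y] [x, y, x]" by simp
      have s3: "subseq [y, x] [x, y, x]" by (simp add: adj_neq[OF xy(1)])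
      have s4: "subseq [x, y, x] [x, y, x]" by (rule subseq_order.order_refl)
      have "u = word_perm [x] \<or> u = word_perm [x, y] \<or> u = word_perm [y, x] \<or> u = word_perm [x, y, x]"
        using that unfolding S4_def by blast
      then have le1: "?le u t"
        using sub[OF rx s1] sub[OF rxy s2] sub[OF ryx s3] sub[OF rxyx s4] by blast
      have le2: "?le (sigma x) u"
        using that atom_iff[OF rx, of x] atom_iff[OF rxy, of x] atom_iff[OF ryx, of x] atom_iff[OF rxyx, of x]
        unfolding S4_def by auto
      from le1 le2 show ?thesis by blast
    qed
    have S4P: "u \<in> ?P" if "u \<in> S4" for u using S4prop[OF that] bruhat_trans tw ideal_iff by blast
    have S4T: "fst (f u)" if "u \<in> S4" for u using S4prop[OF that] layer[OF S4P[OF that]] xy(4) by simp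
    define h where "h u = g (False, snd (f u))" for u
    have hP: "h u \<in> ?P" if "u \<in> S4" for u unfolding h_def using gin fQ[OF S4P[OF that]] by simp
    have fh: "f (h u) = (False, snd (f u))" if "u \<in> S4" for u unfolding h_def using fg fQ[OF S4P[OF that]] by simp
    have hlow: "h u \<in> {id, sigma y}" if u: "u \<in> S4" for u
    proof -
      have "?le u t" using S4prop[OF u] by blast
      then have "?le (snd (f u)) (snd (f t))" using ford[OF S4P[OF u] tP] by blast
      then have hle: "?le (h u) t" using ford[OF hP[OF u] tP] fh[OF u] by simp
      have "\<not> ?le (sigma x) (h u)" using layer[OF hP[OF u]] fh[OF u] xy(4) by simp
      obtain r where r: "reduced_word n (h u) r" "subseq r [x, y, x]"
        using subword_property[OF hle redt'] by blast
      have "x \<notin> set r" using atom_iff[OF r(1)] \<open>\<not> ?le (sigma x) (h u)\<close> by blast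
      then show ?thesis using enum_low[OF xy(1) r] by blast
    qed
    have hinj: "inj_on h S4"
    proof (rule inj_onI)
      fix u1 u2 assume u: "u1 \<in> S4" "u2 \<in> S4" "h u1 = h u2"
      then have "snd (f u1) = snd (f u2)" using fh by (metis snd_conv)
      moreover have "fst (f u1) = fst (f u2)" using S4T u by simp
      ultimately have "f u1 = f u2" by (simp add: prod_eq_iff)
      then show "u1 = u2" using finj S4P u inj_on_def by metis
    qed
    have "card S4 \<le> card {id, sigma y}"
      by (rule card_inj_on_le[OF hinj]) (use hlow in auto)
    also have "\<dots> \<le> 2" by (cases "id = sigma y") simp_all
    finally show False using cS4 by simp
  qed
  have "k \<noteq> i" using sit layer[OF tP] ftF by blast
  have ww: "?le w w" using bruhat_refl2[OF vw] .
  have vv: "?le v v" using bruhat_refl1[OF vw] .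
  have "k \<in> supp n w" using atom_supp[OF ww] skP ideal_iff by blast
  then have "k \<in> supp n v" using supw \<open>k \<noteq> i\<close> by blast
  then have skv: "?le (sigma k) v" using atom_supp[OF vv] by blast
  have vQ: "v \<in> ?Q" using vv ideal_iff by blast
  have vP: "v \<in> ?P" using vQ QP by blast
  have fvT: "fst (f v)" using layer[OF vP] skv by simp
  define y where "y = snd (f v)"
  have yQ: "y \<in> ?Q" using fQ[OF vP] y_def by simp
  have fv: "f v = (True, y)" using fvT y_def by (cases "f v") simp
  define v' where "v' = g (False, v)"
  define u where "u = g (False, y)"
  have v'P: "v' \<in> ?P" using gin vQ v'_def by simp
  have fv': "f v' = (False, v)" using fg vQ v'_def by simp
  have uP: "u \<in> ?P" using gin yQ u_def by simp
  have fu: "f u = (False, y)" using fg yQ u_def by simp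
  have yy: "?le y y" using refl yQ QP by blast
  have yv: "?le y v" using Qle yQ by blast
  have P'eq: "bruhat_ideal n v' = {x \<in> ?P. \<not> fst (f x)}"
  proof (intro equalityI subsetI)
    fix x assume "x \<in> bruhat_ideal n v'"
    then have xv: "?le x v'" by (simp add: ideal_iff)
    then have "?le x w" using bruhat_trans Pw[OF v'P] by blast
    then have xP: "x \<in> ?P" by (simp add: ideal_iff)
    then have "\<not> fst (f x)" using ford[OF xP v'P] xv fv' by simp
    then show "x \<in> {x \<in> ?P. \<not> fst (f x)}" using xP by simp
  next
    fix x assume "x \<in> {x \<in> ?P. \<not> fst (f x)}"
    then have xP: "x \<in> ?P" and nf: "\<not> fst (f x)" by auto
    have "?le (snd (f x)) v" using Qle fQ[OF xP] by blast
    then have "?le x v'" using ford[OF xP v'P] nf fv' by simp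
    then show "x \<in> bruhat_ideal n v'" by (simp add: ideal_iff)
  qed
  have card_lt: "card (bruhat_ideal n v') < card ?P"
  proof (rule psubset_card_mono[OF finite_ideal])
    show "bruhat_ideal n v' \<subset> ?P" using P'eq vP fvT by blast
  qed
  have uv': "?le u v'" using ford[OF uP v'P] fu fv' yv by simp
  have uv: "?le u v" using ford[OF uP vP] fu fv yy by simp
  have iu: "i \<notin> supp n u" using supp_mono[OF uv] inv by blast
  have v'w: "?le v' w" using Pw[OF v'P] .
  have v'v': "?le v' v'" using bruhat_refl1[OF v'w] .
  have suppu: "supp n v' - {i} \<subseteq> supp n u"
  proof
    fix m assume m: "m \<in> supp n v' - {i}"
    have "m \<in> supp n w" using supp_mono[OF v'w] m by blast
    then have "m \<in> supp n v" using supw m by blast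
    then have smv: "?le (sigma m) v" using atom_supp[OF vv] by blast
    have smP: "sigma m \<in> ?P" using bruhat_trans[OF smv vw] ideal_iff by blast
    have smv': "?le (sigma m) v'" using atom_supp[OF v'v'] m by blast
    have nf: "\<not> fst (f (sigma m))"
    proof
      assume "fst (f (sigma m))"
      then have "?le (sigma k) (sigma m)" using layer[OF smP] by simp
      then have "k = m" using sigma_le_sigma by blast
      then have "fst (f v')" using layer[OF v'P] smv' by simp
      then show False using fv' by simp
    qed
    have "?le (snd (f (sigma m))) y" using ford[OF smP vP] smv fv by simp
    then have "?le (sigma m) u" using ford[OF smP uP] nf fu by simp
    then show "m \<in> supp n u" using atom_supp[OF uv] by blast
  qed
  have tv': "?le t v'" using ford[OF tP v'P] ftF fv' Qle[OF fQ[OF tP]] by simp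
  have iso: "iso_two_times n v' u"
  proof -
    let ?P' = "bruhat_ideal n v'"
    let ?U = "bruhat_ideal n u"
    define G where "G x = (fst (f (snd (f x))), g (False, snd (f (snd (f x)))))" for x
    define H where "H p = g (False, g (fst p, snd (f (snd p))))" for p :: "bool \<times> (nat \<Rightarrow> nat)"
    have P'P: "x \<in> ?P" and P'F: "\<not> fst (f x)" if "x \<in> ?P'" for x using that P'eq by auto
    have qQ: "snd (f x) \<in> ?Q" if "x \<in> ?P'" for x using fQ[OF P'P[OF that]] .
    have qP: "snd (f x) \<in> ?P" if "x \<in> ?P'" for x using qQ[OF that] QP by blast
    have zQ: "snd (f (snd (f x))) \<in> ?Q" if "x \<in> ?P'" for x using fQ[OF qP[OF that]] .
    have zy: "?le (snd (f (snd (f x)))) y" if "x \<in> ?P'" for x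
    proof -
      have "?le (snd (f x)) v" using Qle[OF qQ[OF that]] .
      then show ?thesis using ford[OF qP[OF that] vP] fv by simp
    qed
    have gU: "g (False, z) \<in> ?U" if "z \<in> ?Q" "?le z y" for z
    proof -
      have "g (False, z) \<in> ?P" using gin that by simp
      moreover have "f (g (False, z)) = (False, z)" using fg that by simp
      ultimately have "?le (g (False, z)) u" using ford[OF _ uP] fu that by simp
      then show ?thesis by (simp add: ideal_iff)
    qed
    have UP: "z' \<in> ?P" if "z' \<in> ?U" for z'
      using that bruhat_trans[OF _ Pw[OF uP]] ideal_iff by blast
    have Ufacts: "\<not> fst (f z') \<and> ?le (snd (f z')) y" if "z' \<in> ?U" for z'
    proof -
      have "?le z' u" using that ideal_iff by blast
      then show ?thesis using ford[OF UP[OF that] uP] fu by simp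
    qed
    have map1: "G x \<in> UNIV \<times> ?U" if "x \<in> ?P'" for x
      unfolding G_def using gU[OF zQ[OF that] zy[OF that]] by simp
    have map2: "H p \<in> ?P'" if "p \<in> UNIV \<times> ?U" for p
    proof -
      obtain b z' where p: "p = (b, z')" by (cases p)
      have z'U: "z' \<in> ?U" using that p by simp
      define \<zeta> where "\<zeta> = snd (f z')"
      have \<zeta>Q: "\<zeta> \<in> ?Q" using fQ[OF UP[OF z'U]] \<zeta>_def by simp
      have \<zeta>y: "?le \<zeta> y" using Ufacts[OF z'U] \<zeta>_def by simp
      define q where "q = g (b, \<zeta>)"
      have qP: "q \<in> ?P" using gin \<zeta>Q q_def by simp
      have fq: "f q = (b, \<zeta>)" using fg \<zeta>Q q_def by simp
      have "?le q v" using ford[OF qP vP] fq fv \<zeta>y by simp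
      then have qQ': "q \<in> ?Q" by (simp add: ideal_iff)
      have "g (False, q) \<in> ?P" using gin qQ' by simp
      moreover have "f (g (False, q)) = (False, q)" using fg qQ' by simp
      ultimately have "g (False, q) \<in> ?P'" using P'eq by simp
      then show ?thesis unfolding H_def p q_def \<zeta>_def by simp
    qed
    have HG: "H (G x) = x" if "x \<in> ?P'" for x
    proof -
      define q where "q = snd (f x)"
      define \<zeta> where "\<zeta> = snd (f q)"
      have qP': "q \<in> ?P" using qP[OF that] q_def by simp
      have \<zeta>Q: "\<zeta> \<in> ?Q" using zQ[OF that] q_def \<zeta>_def by simp
      have G: "G x = (fst (f q), g (False, \<zeta>))" unfolding G_def q_def \<zeta>_def by simp
      have "snd (f (g (False, \<zeta>))) = \<zeta>" using fg \<zeta>Q by simp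
      then have "H (G x) = g (False, g (fst (f q), \<zeta>))" unfolding H_def G by simp
      also have "g (fst (f q), \<zeta>) = q" using gf[OF qP'] \<zeta>_def by simp
      also have "g (False, q) = x"
      proof -
        have "f x = (False, q)" using P'F[OF that] q_def by (cases "f x") simp
        then show ?thesis using gf[OF P'P[OF that]] by simp
      qed
      finally show ?thesis .
    qed
    have GH: "G (H p) = p" if "p \<in> UNIV \<times> ?U" for p
    proof -
      obtain b z' where p: "p = (b, z')" by (cases p)
      have z'U: "z' \<in> ?U" using that p by simp
      define \<zeta> where "\<zeta> = snd (f z')"
      have \<zeta>Q: "\<zeta> \<in> ?Q" using fQ[OF UP[OF z'U]] \<zeta>_def by simp
      have \<zeta>y: "?le \<zeta> y" using Ufacts[OF z'U] \<zeta>_def by simp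
      define q where "q = g (b, \<zeta>)"
      have qP: "q \<in> ?P" using gin \<zeta>Q q_def by simp
      have fq: "f q = (b, \<zeta>)" using fg \<zeta>Q q_def by simp
      have "?le q v" using ford[OF qP vP] fq fv \<zeta>y by simp
      then have qQ': "q \<in> ?Q" by (simp add: ideal_iff)
      have Hp: "H p = g (False, q)" unfolding H_def p q_def \<zeta>_def by simp
      have fHp: "f (H p) = (False, q)" using Hp fg qQ' by simp
      have fz': "f z' = (False, \<zeta>)" using Ufacts[OF z'U] \<zeta>_def by (cases "f z'") simp
      have "G (H p) = (b, g (False, \<zeta>))" unfolding G_def fHp using fq by simp
      also have "g (False, \<zeta>) = z'" using gf[OF UP[OF z'U]] fz' by simp
      finally show ?thesis using p by simp
    qed
    have bij: "bij_betw G ?P' (UNIV \<times> ?U)"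
    proof (rule bij_betw_byWitness[where f'=H])
      show "\<forall>a\<in>?P'. H (G a) = a" using HG by blast
      show "\<forall>a'\<in>UNIV \<times> ?U. G (H a') = a'" using GH by blast
      show "G ` ?P' \<subseteq> UNIV \<times> ?U" using map1 by blast
      show "H ` (UNIV \<times> ?U) \<subseteq> ?P'" using map2 by blast
    qed
    have ord: "?le x1 x2 \<longleftrightarrow> (fst (G x1) \<le> fst (G x2) \<and> ?le (snd (G x1)) (snd (G x2)))"
      if x: "x1 \<in> ?P'" "x2 \<in> ?P'" for x1 x2
    proof -
      have "?le x1 x2 \<longleftrightarrow> ?le (snd (f x1)) (snd (f x2))"
        using ford[OF P'P[OF x(1)] P'P[OF x(2)]] P'F[OF x(1)] P'F[OF x(2)] by simp
      also have "\<dots> \<longleftrightarrow> fst (f (snd (f x1))) \<le> fst (f (snd (f x2))) \<and>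
          ?le (snd (f (snd (f x1)))) (snd (f (snd (f x2))))"
        using ford[OF qP[OF x(1)] qP[OF x(2)]] .
      also have "?le (snd (f (snd (f x1)))) (snd (f (snd (f x2)))) \<longleftrightarrow>
          ?le (g (False, snd (f (snd (f x1))))) (g (False, snd (f (snd (f x2)))))"
      proof -
        have "g (False, snd (f (snd (f x1)))) \<in> ?P" "g (False, snd (f (snd (f x2)))) \<in> ?P"
          using gin zQ x by auto
        then show ?thesis using ford fg zQ x by simp
      qed
      finally show ?thesis unfolding G_def by simp
    qed
    show ?thesis unfolding iso_two_times_def using bij ord by blast
  qed
  show False using less.hyps[OF card_lt uv' iu suppu iso] tv' t_def by simp
qed


lemma count_two_split:
  assumes "count_list xs x \<ge> 2"
  shows "\<exists>a b c. xs = a @ x # b @ x # c \<and> x \<notin> set b"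
proof -
  have "count_list xs x \<noteq> 0" using assms by simp
  then have "x \<in> set xs" using count_list_0_iff by metis
  then obtain a rest where xs: "xs = a @ x # rest" "x \<notin> set a" using split_list_first by metis
  have "count_list rest x \<ge> 1" using assms xs count_list_0_iff[of a x] by simp
  then have "count_list rest x \<noteq> 0" by simp
  then have "x \<in> set rest" using count_list_0_iff by metis
  then obtain b c where "rest = b @ x # c" "x \<notin> set b" using split_list_first by metis
  then show ?thesis using xs by blast
qed

lemma commute_word:
  assumes "\<forall>m\<in>set b. Suc i < m \<or> Suc m < i"
  shows "sigma i \<circ> word_perm b = word_perm b \<circ> sigma i"
  using assms
proof (induction b)
  case Nil then show ?case by simp
next
  case (Cons m b)
  have "sigma i \<circ> word_perm (m # b) = (sigma i \<circ> sigma m) \<circ> word_perm b" by (simp add: comp_assoc)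
  also have "\<dots> = (sigma m \<circ> sigma i) \<circ> word_perm b" using sigma_comm[of i m] Cons.prems by simp
  also have "\<dots> = sigma m \<circ> (sigma i \<circ> word_perm b)" by (simp add: comp_assoc)
  also have "\<dots> = sigma m \<circ> (word_perm b \<circ> sigma i)"
  proof -
    have ih: "sigma i \<circ> word_perm b = word_perm b \<circ> sigma i" by (rule Cons.IH) (use Cons.prems in simp)
    show ?thesis by (simp only: ih)
  qed
  also have "\<dots> = word_perm (m # b) \<circ> sigma i" by (simp only: word_perm_Cons comp_assoc)
  finally show ?case .
qed

lemma subseq3_split:
  assumes "m \<in> set b"
  shows "subseq [x, m, y] (a @ x # b @ y # c)"
proof -
  have "subseq [m] b" using assms subseq_singleton_left by metis
  moreover have "subseq [y] (y # c)" by simp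
  ultimately have "subseq ([m] @ [y]) (b @ (y # c))" by (rule list_emb_append_mono)
  then have "subseq (x # [m, y]) (x # b @ y # c)" by simp
  then have "subseq [x, m, y] (x # b @ y # c)" by simp
  then show ?thesis by (rule subseq_drop_many)
qed

lemma subseq_nth_cons:
  assumes "a < length s" "subseq r (drop (Suc a) s)"
  shows "subseq (s ! a # r) s"
proof -
  have e: "s = take a s @ s ! a # drop (Suc a) s" using id_take_nth_drop[OF assms(1)] .
  have "subseq (s ! a # r) (s ! a # drop (Suc a) s)" using assms(2) by simp
  then have "subseq (s ! a # r) (take a s @ s ! a # drop (Suc a) s)" by (rule subseq_drop_many)
  then show ?thesis using e by simp
qed

lemma subseq_nth3:
  assumes "a < p" "p < b" "b < length s"
  shows "subseq [s ! a, s ! p, s ! b] s"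
proof -
  let ?s1 = "drop (Suc a) s"
  have bin: "s ! b \<in> set (drop (Suc p) s)"
  proof -
    have "drop (Suc p) s ! (b - Suc p) = s ! b" using assms by simp
    moreover have "b - Suc p < length (drop (Suc p) s)" using assms by simp
    ultimately show ?thesis by (metis nth_mem)
  qed
  have "subseq [s ! b] (drop (Suc p) s)" using bin subseq_singleton_left by metis
  moreover have "drop (Suc (p - Suc a)) ?s1 = drop (Suc p) s" using assms by simp
  ultimately have "subseq [s ! b] (drop (Suc (p - Suc a)) ?s1)" by simp
  moreover have "p - Suc a < length ?s1" using assms by simp
  ultimately have "subseq (?s1 ! (p - Suc a) # [s ! b]) ?s1" by (rule subseq_nth_cons[rotated])
  moreover have "?s1 ! (p - Suc a) = s ! p" using assms by simp
  ultimately have "subseq [s ! p, s ! b] ?s1" by simp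
  moreover have "a < length s" using assms by simp
  ultimately show ?thesis using subseq_nth_cons[of a s "[s ! p, s ! b]"] by simp
qed

lemma letter_range: "reduced_word n w s \<Longrightarrow> m \<in> set s \<Longrightarrow> m \<in> {1..<n}"
  unfolding reduced_word_def is_word_def by blast

theorem proposition2p9:
  fixes n i :: nat and w v :: "nat \<Rightarrow> nat"
  assumes "w permutes {1..n}" and "v permutes {1..n}"
    and "bruhat_le n v w" and "v \<noteq> w"
    and "supp n v \<subset> supp n w"
    and "iso_two_times n w v"
    and "supp n w - supp n v = {i}"
  shows "\<forall>s. reduced_word n w s \<longrightarrow> unconfined i s"
proof (intro allI impI)
  fix s assume red: "reduced_word n w s"
  have iw: "i \<in> supp n w" and inv: "i \<notin> supp n v" and supw: "supp n w - {i} \<subseteq> supp n v"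
    using assms(7) by auto
  have ww: "bruhat_le n w w" using bruhat_refl[OF red] .
  have siw: "bruhat_le n (sigma i) w" using atom_supp[OF ww] iw by blast
  have iss: "i \<in> set s" using atom_iff[OF red] siw by blast
  have irange: "i \<in> {1..<n}" using letter_range[OF red iss] .
  have key: "\<exists>j. j \<in> {1..<n} \<and> adj i j \<and> bruhat_le n (word_perm [i, j, i]) w"
    if nu: "\<not> unconfined i s"
  proof -
    have c0: "count_list s i \<noteq> 0" using iss count_list_0_iff by metis
    show ?thesis
    proof (cases "count_list s i = 1")
      case False
      then have "count_list s i \<ge> 2" using c0 by linarith
      then obtain a b c where s: "s = a @ i # b @ i # c" "i \<notin> set b" using count_two_split[of s i] by blast
      show ?thesis
      proof (cases "\<exists>m\<in>set b. adj i m")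
        case True
        then obtain m where m: "m \<in> set b" "adj i m" by blast
        have mr: "m \<in> {1..<n}" using letter_range[OF red] m(1) s(1) by simp
        have "subseq [i, m, i] s" using subseq3_split[OF m(1)] s(1) by simp
        moreover have "reduced_word n (word_perm [i, m, i]) [i, m, i]" using red3[OF m(2) irange mr] .
        ultimately have "bruhat_le n (word_perm [i, m, i]) w" using red unfolding bruhat_le_def by blast
        then show ?thesis using m mr by blast
      next
        case False
        have "\<forall>m\<in>set b. Suc i < m \<or> Suc m < i"
        proof
          fix m assume m: "m \<in> set b"
          then have "\<not> adj i m" "m \<noteq> i" using False s(2) by auto
          then have "m \<noteq> Suc i" "i \<noteq> Suc m" "m \<noteq> i" unfolding adj_def by auto
          then show "Suc i < m \<or> Suc m < i" by linarith
        qed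
        then have cm: "sigma i \<circ> word_perm b = word_perm b \<circ> sigma i" by (rule commute_word)
        have e2: "sigma i \<circ> word_perm b \<circ> sigma i = word_perm b"
        proof -
          have "sigma i \<circ> word_perm b \<circ> sigma i = word_perm b \<circ> sigma i \<circ> sigma i" by (simp only: cm)
          also have "\<dots> = word_perm b" by (simp only: comp_assoc sigma_sigma comp_id)
          finally show ?thesis .
        qed
        have "word_perm s = word_perm a \<circ> (sigma i \<circ> word_perm b \<circ> sigma i) \<circ> word_perm c"
          using s(1) by (simp add: comp_assoc)
        then have "word_perm s = word_perm a \<circ> word_perm b \<circ> word_perm c" unfolding e2 .
        moreover have "word_perm s = w" using red unfolding reduced_iff by simp
        ultimately have e: "word_perm (a @ b @ c) = w" by (simp add: comp_assoc)
        have "is_word n s" using red unfolding reduced_iff by simp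
        then have iw3: "is_word n (a @ b @ c)" using s(1) by simp
        have "\<forall>t. is_word n t \<and> word_perm t = w \<longrightarrow> length s \<le> length t"
          using red unfolding reduced_word_def by blast
        then have "length s \<le> length (a @ b @ c)" using iw3 e by blast
        then show ?thesis using s(1) by simp
      qed
    next
      case True
      then obtain p a b where pab: "p < length s" "s ! p = i" "a < p" "p < b" "b < length s"
        "(s ! a = i + 1 \<and> s ! b = i + 1) \<or> (i \<ge> 1 \<and> s ! a = i - 1 \<and> s ! b = i - 1)"
        using nu unfolding unconfined_def by blast
      define j where "j = s ! a"
      have jb: "s ! b = j" using pab(6) j_def by auto
      have jr: "j \<in> {1..<n}" using letter_range[OF red] pab j_def by simp
      have aij: "adj i j" using pab(6) j_def jr by (auto simp: adj_def)
      have "subseq [j, i, j] s" using subseq_nth3[OF pab(3,4,5)] pab(2) j_def jb by simp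
      moreover have "reduced_word n (word_perm [j, i, j]) [j, i, j]" using red3[OF adj_sym[OF aij] jr irange] .
      ultimately have "bruhat_le n (word_perm [j, i, j]) w" using red unfolding bruhat_le_def by blast
      moreover have "word_perm [j, i, j] = word_perm [i, j, i]" using braid[OF aij] by simp
      ultimately show ?thesis using jr aij by auto
    qed
  qed
  show "unconfined i s"
  proof (rule ccontr)
    assume "\<not> unconfined i s"
    then obtain j where j: "j \<in> {1..<n}" "adj i j" "bruhat_le n (word_perm [i, j, i]) w" using key by blast
    show False using main_lemma[OF irange j(1,2) assms(3) inv supw assms(6) j(3)] .
  qed
qed


end
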